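(* With $\mathcal Y=\min\{a_2\mathfrak g_{sr},\mathfrak g_{rd}\}$, $\bar C_{s_2,\mathrm{MRC}}(\rho)=\tfrac12\mathbb E[\log_2(1+\rho\mathcal Y)]$ and $\Xi=\frac{m_{sr}}{\Omega_{sr}a_2}+\frac{m_{rd}}{\Omega_{rd}}$, \begin{align*} \lim_{\rho\to\infty}\Big[\bar C_{s_2,\mathrm{MRC}}(\rho)-\tfrac12\log_2\rho\Big]=\frac{1}{2\ln2}\sum_{\mu=0}^{m_{sr}N_r-1}\sum_{\nu=0}^{m_{rd}N_d-1}&\frac{m_{sr}^{\mu}m_{rd}^{\nu}}{a_2^{\mu}\Omega_{sr}^{\mu}\Omega_{rd}^{\nu}\mu!\,\nu!\,\Xi^{\mu+\nu}}\\ &\times\Big[\Gamma(\mu+\nu+1)\{\psi(\mu+\nu+1)-\ln\Xi\}-(\mu+\nu)\Gamma(\mu+\nu)\{\psi(\mu+\nu)-\ln\Xi\}\Big], \end{align*} where the second term in the bracket is taken to be $0$ when $\mu+\nu=0$. In particular, $\bar C_{s_1,\mathrm{MRC}}+\bar C_{s_2,\mathrm{MRC}}=\tfrac12\log_2\rho+O(1)$ as $\rho\to\infty$, where $\bar C_{s_1,\mathrm{MRC}}=\tfrac12\mathbb E[\log_2(1+\frac{a_1\rho\mathcal X}{a_2\rho\mathcal X+1})]$ with $\mathcal X=\min\{\mathfrak g_{sr},\mathfrak g_{sd}\}$.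
   Context: Let $N_r,N_d$ be positive integers, $m_{sr},m_{sd},m_{rd}$ positive integers, and $\Omega_{sr},\Omega_{sd},\Omega_{rd}>0$. Let $\{G_{sr,i}\}_{i=1}^{N_r}$, $\{G_{sd,j}\}_{j=1}^{N_d}$, $\{G_{rd,k}\}_{k=1}^{N_d}$ be mutually independent random variables, where each $G_{sr,i}$ has the Gamma density $\frac{(m_{sr}/\Omega_{sr})^{m_{sr}}x^{m_{sr}-1}}{\Gamma(m_{sr})}e^{-m_{sr}x/\Omega_{sr}}$, $x>0$, and analogously $G_{sd,j}$ with $(m_{sd},\Omega_{sd})$ and $G_{rd,k}$ with $(m_{rd},\Omega_{rd})$. MRC gains: $\mathfrak g_{sr}=\sum_i G_{sr,i}$, $\mathfrak g_{sd}=\sum_j G_{sd,j}$, $\mathfrak g_{rd}=\sum_k G_{rd,k}$. Let $a_1,a_2\in(0,1)$, $a_1+a_2=1$, $a_1>a_2$. $\psi$ is the digamma function. *)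

theory Defs
  imports "HOL-Probability.Probability" "HOL-Library.Landau_Symbols"
begin

text \<open>Gamma (Nakagami-m power) density with shape m and mean Omega, as in the paper.\<close>
definition gamma_pdf :: "nat \<Rightarrow> real \<Rightarrow> real \<Rightarrow> real" where
  "gamma_pdf m \<Omega> x = (if x > 0 then
     (real m / \<Omega>) ^ m * x ^ (m - 1) / Gamma (real m) * exp (- real m * x / \<Omega>) else 0)"

text \<open>Index set for the three families: Inl i = sr-link i, Inr (Inl j) = sd-link j,
  Inr (Inr k) = rd-link k.\<close>
definition link_idx :: "nat \<Rightarrow> nat \<Rightarrow> (nat + nat + nat) set" where
  "link_idx Nr Nd = Inl ` {1..Nr} \<union> Inr ` Inl ` {1..Nd} \<union> Inr ` Inr ` {1..Nd}"

definition all_links ::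
  "(nat \<Rightarrow> 'a \<Rightarrow> real) \<Rightarrow> (nat \<Rightarrow> 'a \<Rightarrow> real) \<Rightarrow> (nat \<Rightarrow> 'a \<Rightarrow> real)
     \<Rightarrow> nat + nat + nat \<Rightarrow> 'a \<Rightarrow> real" where
  "all_links Gsr Gsd Grd = (\<lambda>t. case t of Inl i \<Rightarrow> Gsr i | Inr (Inl j) \<Rightarrow> Gsd j | Inr (Inr k) \<Rightarrow> Grd k)"

end

theory Submission
  imports Defs
begin


lemma gamma_lb:
  fixes x c :: real assumes x: "x > 0" and c: "c > 0"
  shows "has_bochner_integral lborel (\<lambda>t. indicator {0<..} t * (t powr (x-1) * exp(-c*t))) (Gamma x / c powr x)"
proof -
  define g where "g = (\<lambda>t::real. indicator {0<..} t * (t powr (x-1) * exp(-c*t)))"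
  define f where "f = (\<lambda>t::real. ennreal (t powr (x-1) / exp t) * indicator {0..} t)"
  have hk: "((\<lambda>t. t powr (x-1) / exp t) has_integral Gamma x) {0..}"
    using Gamma_integral_real[OF x] .
  have nn: "integral\<^sup>N lborel f = ennreal (Gamma x)"
    unfolding f_def by (rule nn_integral_has_integral_lebesgue'[OF _ hk]) auto
  have fm: "f \<in> borel_measurable borel" unfolding f_def by measurable
  have "integral\<^sup>N lborel f = \<bar>c\<bar> * (\<integral>\<^sup>+s. f (0 + c * s) \<partial>lborel)"
    by (rule nn_integral_real_affine[OF fm]) (use c in auto)
  also have "(\<lambda>s. f (0 + c * s)) = (\<lambda>s. ennreal (c powr (x-1)) * ennreal (g s))"
  proof
    fix s :: real
    show "f (0 + c * s) = ennreal (c powr (x-1)) * ennreal (g s)"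
    proof (cases "s > 0")
      case True
      then have "f (0 + c * s) = ennreal (c powr (x-1) * g s)" using c
        by (simp add: f_def g_def powr_mult exp_minus field_simps)
      then show ?thesis using c by (simp add: ennreal_mult')
    next
      case False
      then have "s = 0 \<or> s < 0" by auto
      then show ?thesis using c
        by (auto simp: f_def g_def indicator_def zero_le_mult_iff)
    qed
  qed
  also have "(\<integral>\<^sup>+s. ennreal (c powr (x-1)) * ennreal (g s) \<partial>lborel) = ennreal (c powr (x-1)) * integral\<^sup>N lborel g"
    by (rule nn_integral_cmult) (simp add: g_def)
  finally have eq: "ennreal (Gamma x) = ennreal (c powr x) * integral\<^sup>N lborel g"
    using nn c by (simp add: ennreal_mult'[symmetric] mult.assoc[symmetric] powr_mult_base)
  have "integral\<^sup>N lborel g = ennreal (1 / c powr x) * (ennreal (c powr x) * integral\<^sup>N lborel g)"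
    using c by (simp add: mult.assoc[symmetric] ennreal_mult'[symmetric])
  also have "\<dots> = ennreal (Gamma x / c powr x)"
    using c x by (simp add: eq[symmetric] ennreal_mult'[symmetric] Gamma_real_pos less_imp_le)
  finally have "integral\<^sup>N lborel g = ennreal (Gamma x / c powr x)" .
  then show ?thesis unfolding g_def[symmetric]
    by (intro has_bochner_integral_nn_integral) (auto simp: g_def Gamma_real_pos less_imp_le x)
qed



lemma deriv_seq:
  fixes f :: "real \<Rightarrow> real"
  assumes "(f has_field_derivative D) (at x)"
  shows "(\<lambda>k. (f (x + 1 / real (Suc k)) - f x) / (1 / real (Suc k))) \<longlonglongrightarrow> D"
proof -
  have d: "((\<lambda>y. (f y - f x) / (y - x)) \<longlongrightarrow> D) (at x)"
    using assms by (simp add: has_field_derivative_iff)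
  have t: "(\<lambda>k. x + 1 / real (Suc k)) \<longlonglongrightarrow> x"
    using tendsto_add[OF tendsto_const LIMSEQ_inverse_real_of_nat] by (simp add: inverse_eq_divide)
  have "filterlim (\<lambda>k. x + 1 / real (Suc k)) (at x) sequentially"
    unfolding filterlim_at using t by auto
  from filterlim_compose[OF d this] show ?thesis by simp
qed




lemma ln_abs_bound:
  fixes t :: real assumes t: "t > 0"
  shows "\<bar>ln t\<bar> \<le> 2 * t powr (-1/2) + t"
proof (cases "t \<ge> 1")
  case True
  then have "\<bar>ln t\<bar> = ln t" by simp
  also have "\<dots> \<le> t - 1" using t by (rule ln_le_minus_one)
  finally show ?thesis using t by (smt (verit) powr_ge_zero)
next
  case False
  then have "\<bar>ln t\<bar> = - ln t" using t by simp
  also have "\<dots> = 2 * ln (t powr (-1/2))" using t by (simp add: ln_powr)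
  also have "ln (t powr (-1/2)) \<le> t powr (-1/2) - 1" using t by (intro ln_le_minus_one) simp
  finally show ?thesis using t by simp
qed




lemma powr_diff_quot_bound:
  fixes t h :: real assumes t: "t > 0" and h: "0 < h" "h \<le> 1"
  shows "\<bar>(t powr h - 1) / h\<bar> \<le> \<bar>ln t\<bar> * (1 + t)"
proof (cases "t \<ge> 1")
  case True
  define a where "a = h * ln t"
  have a0: "a \<ge> 0" using True h by (simp add: a_def)
  have e: "t powr h = exp a" using t by (simp add: powr_def a_def mult.commute)
  have "exp a * (1 - a) \<le> exp a * exp (-a)"
    using exp_ge_add_one_self[of "-a"] by (intro mult_left_mono) auto
  then have 1: "exp a - 1 \<le> a * exp a" by (simp add: exp_minus_inverse algebra_simps)
  have "exp a \<le> 1 + t"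
  proof -
    have "exp a = t powr h" using e by simp
    also have "\<dots> \<le> t powr 1" using True h by (intro powr_mono) auto
    finally show ?thesis using t by simp
  qed
  then have "a * exp a \<le> a * (1 + t)" using a0 by (rule mult_left_mono)
  with 1 have 2: "exp a - 1 \<le> a * (1 + t)" by linarith
  have "(t powr h - 1) / h \<le> a * (1 + t) / h" using 2 h e by (intro divide_right_mono) auto
  also have "\<dots> = ln t * (1 + t)" using h by (simp add: a_def)
  finally have 3: "(t powr h - 1) / h \<le> ln t * (1 + t)" .
  have "exp a - 1 \<ge> 0" using a0 by simp
  then have "(t powr h - 1) / h \<ge> 0" using h e by simp
  with 3 show ?thesis using True by simp
next
  case False
  define a where "a = h * ln t"
  have a0: "a \<le> 0" using False h t by (simp add: a_def mult_nonneg_nonpos)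
  have e: "t powr h = exp a" using t by (simp add: powr_def a_def mult.commute)
  have "1 - exp a \<le> - a" using exp_ge_add_one_self[of a] by linarith
  moreover have "exp a \<le> 1" using a0 by simp
  ultimately have 1: "\<bar>exp a - 1\<bar> \<le> - a" by linarith
  have "\<bar>(t powr h - 1) / h\<bar> = \<bar>exp a - 1\<bar> / h" using h e by (simp add: abs_divide)
  also have "\<dots> \<le> (- a) / h" using 1 h by (intro divide_right_mono) auto
  also have "\<dots> = - ln t" using h by (simp add: a_def)
  also have "\<dots> \<le> \<bar>ln t\<bar> * (1 + t)"
  proof -
    have "\<bar>ln t\<bar> * 1 \<le> \<bar>ln t\<bar> * (1 + t)" using t by (intro mult_left_mono) auto
    then show ?thesis by simp
  qed
  finally show ?thesis .
qed




lemma powr_split: "a = b + d \<Longrightarrow> (t::real) powr a = t powr b * t powr d"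
  by (simp add: powr_add)

lemma lnmom:
  fixes x c :: real assumes x: "x \<ge> 1" and c: "c > 0"
  shows "has_bochner_integral lborel (\<lambda>t. indicator {0<..} t * (ln t * t powr (x-1) * exp(-c*t)))
           (Gamma x * (Digamma x - ln c) / c powr x)"
proof -
  define G where "G = (\<lambda>y. Gamma y / c powr y)"
  define h where "h = (\<lambda>k::nat. 1 / real (Suc k))"
  define D where "D = Gamma x * (Digamma x - ln c) / c powr x"
  have hpos: "0 < h k" "h k \<le> 1" for k by (auto simp: h_def)
  have xnp: "x \<notin> \<int>\<^sub>\<le>\<^sub>0" using x by (auto dest: nonpos_Ints_nonpos)
  have Geq: "G = (\<lambda>y. Gamma y / exp (y * ln c))" using c by (auto simp: G_def powr_def)
  have g1: "(Gamma has_field_derivative Gamma x * Digamma x) (at x)"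
    by (rule has_field_derivative_Gamma[OF xnp])
  have g2: "((\<lambda>y. exp (y * ln c)) has_field_derivative (exp (x * ln c) * ln c)) (at x)"
    by (auto intro!: derivative_eq_intros)
  have "((\<lambda>y. Gamma y / exp (y * ln c)) has_field_derivative
          ((Gamma x * Digamma x) * exp (x * ln c) - Gamma x * (exp (x * ln c) * ln c)) / (exp (x * ln c) * exp (x * ln c))) (at x)"
    by (rule DERIV_divide[OF g1 g2]) simp
  also have "((Gamma x * Digamma x) * exp (x * ln c) - Gamma x * (exp (x * ln c) * ln c)) / (exp (x * ln c) * exp (x * ln c)) = D"
    using c by (simp add: D_def powr_def field_simps)
  finally have dG: "(G has_field_derivative D) (at x)" unfolding Geq .
  have lim1: "(\<lambda>k. (G (x + h k) - G x) / h k) \<longlonglongrightarrow> D"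
    using deriv_seq[OF dG] by (simp add: h_def)
  define s where "s = (\<lambda>k t. indicator {0<..} t * (t powr (x-1) * ((t powr (h k) - 1) / h k) * exp(-c*t)))"
  define f where "f = (\<lambda>t. indicator {0<..} t * (ln t * t powr (x-1) * exp(-c*t)))"
  define w where "w = (\<lambda>t. indicator {0<..} t * (t powr (x-1) * ((2 * t powr (-1/2) + t) * (1 + t)) * exp(-c*t)))"
  have sint: "has_bochner_integral lborel (s k) ((G (x + h k) - G x) / h k)" for k
  proof -
    have "has_bochner_integral lborel
       (\<lambda>t. (indicator {0<..} t * (t powr (x + h k - 1) * exp(-c*t)) - indicator {0<..} t * (t powr (x-1) * exp(-c*t))) / h k)
       ((Gamma (x + h k) / c powr (x + h k) - Gamma x / c powr x) / h k)"
      using hpos[of k] x c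
      by (intro has_bochner_integral_divide_zero has_bochner_integral_diff gamma_lb) auto
    moreover have "(\<lambda>t. (indicator {0<..} t * (t powr (x + h k - 1) * exp(-c*t)) - indicator {0<..} t * (t powr (x-1) * exp(-c*t))) / h k) = s k"
    proof
      fix t :: real
      show "(indicator {0<..} t * (t powr (x + h k - 1) * exp(-c*t)) - indicator {0<..} t * (t powr (x-1) * exp(-c*t))) / h k = s k t"
      proof (cases "t > 0")
        case True
        have "t powr (x + h k - 1) = t powr ((x - 1) + h k)" by (simp add: algebra_simps)
        also have "\<dots> = t powr (x - 1) * t powr (h k)" by (rule powr_add)
        finally have "t powr (x + h k - 1) = t powr (x - 1) * t powr (h k)" .
        then show ?thesis using True by (simp add: s_def algebra_simps diff_divide_distrib)
      qed (simp add: s_def)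
    qed
    ultimately show ?thesis by (simp add: G_def)
  qed
  have wint: "integrable lborel w"
  proof -
    have "has_bochner_integral lborel
      (\<lambda>t. 2 * (indicator {0<..} t * (t powr (x - 1/2 - 1) * exp(-c*t))) + 2 * (indicator {0<..} t * (t powr (x + 1/2 - 1) * exp(-c*t)))
           + indicator {0<..} t * (t powr (x + 1 - 1) * exp(-c*t)) + indicator {0<..} t * (t powr (x + 2 - 1) * exp(-c*t)))
      (2 * (Gamma (x - 1/2) / c powr (x - 1/2)) + 2 * (Gamma (x + 1/2) / c powr (x + 1/2)) + Gamma (x+1) / c powr (x+1) + Gamma (x+2) / c powr (x+2))"
      using x c by (intro has_bochner_integral_add has_bochner_integral_mult_right gamma_lb) auto
    moreover have "(\<lambda>t. 2 * (indicator {0<..} t * (t powr (x - 1/2 - 1) * exp(-c*t))) + 2 * (indicator {0<..} t * (t powr (x + 1/2 - 1) * exp(-c*t)))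
           + indicator {0<..} t * (t powr (x + 1 - 1) * exp(-c*t)) + indicator {0<..} t * (t powr (x + 2 - 1) * exp(-c*t))) = w"
    proof
      fix t :: real
      show "2 * (indicator {0<..} t * (t powr (x - 1/2 - 1) * exp(-c*t))) + 2 * (indicator {0<..} t * (t powr (x + 1/2 - 1) * exp(-c*t)))
           + indicator {0<..} t * (t powr (x + 1 - 1) * exp(-c*t)) + indicator {0<..} t * (t powr (x + 2 - 1) * exp(-c*t)) = w t"
      proof (cases "t > 0")
        case True
        have t1: "t powr 1 = t" using True by simp
        have e1: "t powr (x - 1/2 - 1) = t powr (x-1) * t powr (-1/2)" by (rule powr_split) simp
        have e2: "t powr (x + 1/2 - 1) = t powr (x-1) * t powr (-1/2) * t"
          using True by (subst powr_split[of _ "x - 1/2 - 1" 1], simp, subst e1) (simp add: t1)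
        have e3: "t powr (x + 1 - 1) = t powr (x-1) * t"
          using True by (subst powr_split[of _ "x - 1" 1], simp) (simp add: t1)
        have e4: "t powr (x + 2 - 1) = t powr (x-1) * t * t"
          using True by (subst powr_split[of _ "x + 1 - 1" 1], simp, subst e3) (simp add: t1)
        show ?thesis using True unfolding e1 e2 e3 e4 by (simp add: w_def algebra_simps)
      qed (simp add: w_def)
    qed
    ultimately have "has_bochner_integral lborel w (2 * (Gamma (x - 1/2) / c powr (x - 1/2)) + 2 * (Gamma (x + 1/2) / c powr (x + 1/2)) + Gamma (x+1) / c powr (x+1) + Gamma (x+2) / c powr (x+2))"
      by simp
    then show ?thesis by (rule integrable.intros)
  qed
  have bound: "\<bar>s k t\<bar> \<le> w t" for k t
  proof (cases "t > 0")
    case True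
    have "\<bar>(t powr (h k) - 1) / h k\<bar> \<le> \<bar>ln t\<bar> * (1 + t)"
      using powr_diff_quot_bound[OF True hpos[of k]] .
    also have "\<dots> \<le> (2 * t powr (-1/2) + t) * (1 + t)"
      using ln_abs_bound[OF True] True by (intro mult_right_mono) auto
    finally have "t powr (x-1) * \<bar>(t powr (h k) - 1) / h k\<bar> * exp(-c*t) \<le> t powr (x-1) * ((2 * t powr (-1/2) + t) * (1 + t)) * exp(-c*t)"
      by (intro mult_right_mono mult_left_mono) auto
    then show ?thesis using True by (simp add: s_def w_def abs_mult)
  qed (simp add: s_def w_def)
  have lim: "(\<lambda>k. s k t) \<longlonglongrightarrow> f t" for t
  proof (cases "t > 0")
    case True
    have "((\<lambda>y. exp (y * ln t)) has_field_derivative (exp (0 * ln t) * ln t)) (at 0)"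
      by (auto intro!: derivative_eq_intros)
    then have "((\<lambda>y. t powr y) has_field_derivative ln t) (at 0)"
      using True by (simp add: powr_def)
    from deriv_seq[OF this] have "(\<lambda>k. (t powr (h k) - 1) / h k) \<longlonglongrightarrow> ln t"
      using True by (simp add: h_def)
    then have "(\<lambda>k. indicator {0<..} t * (t powr (x-1) * ((t powr (h k) - 1) / h k) * exp(-c*t)))
       \<longlonglongrightarrow> indicator {0<..} t * (t powr (x-1) * ln t * exp(-c*t))"
      by (intro tendsto_intros)
    then show ?thesis by (simp add: s_def f_def mult_ac)
  qed (simp add: s_def f_def)
  have fm: "f \<in> borel_measurable lborel" unfolding f_def by measurable
  have sm: "s k \<in> borel_measurable lborel" for k unfolding s_def by measurable
  have fi: "integrable lborel f"
    by (rule integrable_dominated_convergence[OF fm sm wint]) (auto intro!: AE_I2 lim bound)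
  have "(\<lambda>k. integral\<^sup>L lborel (s k)) \<longlonglongrightarrow> integral\<^sup>L lborel f"
    by (rule integral_dominated_convergence[OF fm sm wint]) (auto intro!: AE_I2 lim bound)
  moreover have "(\<lambda>k. integral\<^sup>L lborel (s k)) = (\<lambda>k. (G (x + h k) - G x) / h k)"
    using sint by (intro ext has_bochner_integral_integral_eq)
  ultimately have "integral\<^sup>L lborel f = D" using lim1 LIMSEQ_unique by metis
  then show ?thesis using fi unfolding f_def[symmetric] D_def[symmetric]
    by (simp add: has_bochner_integral_iff)
qed




definition SU :: "nat \<Rightarrow> real \<Rightarrow> real \<Rightarrow> real" where
  "SU k l y = (\<Sum>n\<le>k. (l*y)^n * exp (-l*y) / fact n)"

lemma SU_deriv: "DERIV (SU k l) y :> - (l^(Suc k) * y^k * exp (-l*y) / fact k)"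
proof (induction k)
  case 0
  show ?case unfolding SU_def by (auto intro!: derivative_eq_intros)
next
  case (Suc k)
  have e: "SU (Suc k) l = (\<lambda>y. SU k l y + (l*y)^(Suc k) * exp (-l*y) / fact (Suc k))"
    by (auto simp: SU_def)
  have d: "((\<lambda>y. (l*y)^(Suc k) * exp (-l*y) / fact (Suc k)) has_field_derivative
      ((real (Suc k) * (l*y)^k * l * exp (-l*y) + (l*y)^(Suc k) * (exp (-l*y) * (- l))) / fact (Suc k))) (at y)"
    by (auto intro!: derivative_eq_intros simp del: fact_Suc power_Suc)
  have "DERIV (SU (Suc k) l) y :> - (l^(Suc k) * y^k * exp (-l*y) / fact k)
      + (real (Suc k) * (l*y)^k * l * exp (-l*y) + (l*y)^(Suc k) * (exp (-l*y) * (- l))) / fact (Suc k)"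
    unfolding e by (intro DERIV_add Suc d)
  also have "- (l^(Suc k) * y^k * exp (-l*y) / fact k)
      + (real (Suc k) * (l*y)^k * l * exp (-l*y) + (l*y)^(Suc k) * (exp (-l*y) * (- l))) / fact (Suc k)
      = - (l^(Suc (Suc k)) * y^(Suc k) * exp (-l*y) / fact (Suc k))"
    by (simp add: field_simps power_mult_distrib del: fact_Suc) (simp add: algebra_simps)
  finally show ?case .
qed

lemma SU_nonneg: "0 \<le> l \<Longrightarrow> 0 \<le> y \<Longrightarrow> 0 \<le> SU k l y"
  unfolding SU_def by (intro sum_nonneg) auto

lemma SU_0: "SU k l 0 = 1"
  unfolding SU_def by (simp add: power_0_left sum.atMost_shift)

lemma SU_CDF: "0 \<le> y \<Longrightarrow> 1 - erlang_CDF k l y = SU k l y"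
  by (simp add: erlang_CDF_def SU_def)

lemma SU_CDF': "y < 0 \<Longrightarrow> 1 - erlang_CDF k l y = 1"
  by (simp add: erlang_CDF_def)

definition fY :: "nat \<Rightarrow> real \<Rightarrow> nat \<Rightarrow> real \<Rightarrow> real \<Rightarrow> real" where
  "fY kA a kB b y = (if y < 0 then 0 else erlang_density kA a y * SU kB b y + SU kA a y * erlang_density kB b y)"

lemma fY_nonneg: "0 < a \<Longrightarrow> 0 < b \<Longrightarrow> 0 \<le> fY kA a kB b y"
  unfolding fY_def by (auto intro!: add_nonneg_nonneg mult_nonneg_nonneg SU_nonneg)

lemma fY_meas[measurable]: "fY kA a kB b \<in> borel_measurable borel"
  unfolding fY_def SU_def by measurable




lemma (in prob_space) erlang_le_all:
  assumes D: "distributed M lborel X (erlang_density k l)"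
  assumes [simp, arith]: "0 < l"
  shows "\<P>(x in M. X x \<le> a) = erlang_CDF k l a"
proof -
  have "emeasure M {x \<in> space M. X x \<le> a } = emeasure (distr M lborel X) {.. a}"
    using distributed_measurable[OF D]
    by (subst emeasure_distr) (auto intro!: arg_cong2[where f=emeasure])
  also have "\<dots> = emeasure (density lborel (erlang_density k l)) {.. a}"
    unfolding distributed_distr_eq_density[OF D] ..
  also have "\<dots> = erlang_CDF k l a"
    by (auto intro!: emeasure_erlang_density)
  finally show ?thesis
    by (auto simp: emeasure_eq_measure measure_nonneg)
qed

lemma (in prob_space) erlang_gt_all:
  assumes D[simp]: "distributed M lborel X (erlang_density k l)"
  assumes [arith]: "0 < l"
  shows "\<P>(x in M. a < X x ) = 1 - (erlang_CDF k l a)"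
proof -
  have " 1 - (erlang_CDF k l a) = 1 - \<P>(x in M. X x \<le> a)" by (subst erlang_le_all) auto
  also have "\<dots> = prob (space M - {x \<in> space M. X x \<le> a })"
    using distributed_measurable[OF D] by (auto simp: prob_compl)
  also have "\<dots> = \<P>(x in M. a < X x )" by (auto intro!: arg_cong[where f=prob] simp: not_le)
  finally show ?thesis by simp
qed

lemma (in prob_space) Ydist:
  assumes U: "distributed M lborel U (erlang_density kA a)" and V: "distributed M lborel V (erlang_density kB b)"
    and a: "0 < a" and b: "0 < b" and ind: "indep_var borel U borel V"
  shows "distributed M lborel (\<lambda>\<omega>. min (U \<omega>) (V \<omega>)) (fY kA a kB b)"
proof (rule distributedI_borel_atMost[where g = "\<lambda>z. 1 - (1 - erlang_CDF kA a z) * (1 - erlang_CDF kB b z)"])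
  have [measurable]: "U \<in> borel_measurable M" "V \<in> borel_measurable M"
    using U V a b by (auto simp: erlang_distributed_iff)
  show "(\<lambda>\<omega>. min (U \<omega>) (V \<omega>)) \<in> borel_measurable M" by measurable
  show "fY kA a kB b \<in> borel_measurable borel" by measurable
  show "AE x in lborel. 0 \<le> fY kA a kB b x" using fY_nonneg a b by auto
  fix z :: real
  show "(\<integral>\<^sup>+x. ennreal (fY kA a kB b x * indicator {..z} x) \<partial>lborel)
        = ennreal (1 - (1 - erlang_CDF kA a z) * (1 - erlang_CDF kB b z))"
  proof (cases "z < 0")
    case True
    have "(\<integral>\<^sup>+x. ennreal (fY kA a kB b x * indicator {..z} x) \<partial>lborel) = (\<integral>\<^sup>+x. 0 \<partial>(lborel::real measure))"
      using True by (intro nn_integral_cong) (auto simp: fY_def indicator_def)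
    then show ?thesis using True by (simp add: SU_CDF')
  next
    case False
    define F where "F = (\<lambda>y. - (SU kA a y * SU kB b y))"
    have "(\<integral>\<^sup>+x. ennreal (fY kA a kB b x * indicator {..z} x) \<partial>lborel)
        = (\<integral>\<^sup>+x. ennreal (fY kA a kB b x) * indicator {0..z} x \<partial>lborel)"
      by (intro nn_integral_cong) (auto simp: fY_def indicator_def)
    also have "\<dots> = F z - F 0"
    proof (rule nn_integral_FTC_Icc)
      fix y :: real assume y: "y \<in> {0..z}"
      have "DERIV (\<lambda>y. SU kA a y * SU kB b y) y :> (- (a^(Suc kA) * y^kA * exp (-a*y) / fact kA)) * SU kB b y
            + (- (b^(Suc kB) * y^kB * exp (-b*y) / fact kB)) * SU kA a y"
        by (rule DERIV_mult[OF SU_deriv SU_deriv])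
      then have "DERIV F y :> - ((- (a^(Suc kA) * y^kA * exp (-a*y) / fact kA)) * SU kB b y
            + (- (b^(Suc kB) * y^kB * exp (-b*y) / fact kB)) * SU kA a y)"
        unfolding F_def by (rule DERIV_minus)
      then show "DERIV F y :> fY kA a kB b y" using y by (simp add: fY_def erlang_density_def algebra_simps)
      show "0 \<le> fY kA a kB b y" using fY_nonneg a b by auto
    qed (use False in auto)
    also have "F z - F 0 = 1 - (1 - erlang_CDF kA a z) * (1 - erlang_CDF kB b z)"
      using False by (simp add: F_def SU_0 SU_CDF)
    finally show ?thesis by simp
  qed
  have gt: "\<P>(x in M. z < min (U x) (V x)) = (1 - erlang_CDF kA a z) * (1 - erlang_CDF kB b z)"
  proof -
    have "\<P>(x in M. z < min (U x) (V x)) = \<P>(x in M. U x \<in> {z<..} \<and> V x \<in> {z<..})"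
      by (auto intro!: arg_cong[where f=prob])
    also have "\<dots> = \<P>(x in M. U x \<in> {z<..}) * \<P>(x in M. V x \<in> {z<..})"
      by (rule prob_indep_random_variable[OF ind]) auto
    also have "\<dots> = \<P>(x in M. z < U x) * \<P>(x in M. z < V x)" by simp
    also have "\<dots> = (1 - erlang_CDF kA a z) * (1 - erlang_CDF kB b z)"
      using erlang_gt_all[OF U a] erlang_gt_all[OF V b] by simp
    finally show ?thesis .
  qed
  have "{x \<in> space M. min (U x) (V x) \<le> z} = space M - {x \<in> space M. z < min (U x) (V x)}"
    by auto
  then have "prob {x \<in> space M. min (U x) (V x) \<le> z} = 1 - prob {x \<in> space M. z < min (U x) (V x)}"
    by (auto simp: prob_compl)
  then show "emeasure M {x \<in> space M. min (U x) (V x) \<le> z} = ennreal (1 - (1 - erlang_CDF kA a z) * (1 - erlang_CDF kB b z))"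
    using gt by (simp add: emeasure_eq_measure)
qed




lemma lnmom_nat:
  fixes c :: real assumes c: "c > 0"
  shows "has_bochner_integral lborel (\<lambda>t. indicator {0<..} t * (ln t * t^n * exp(-c*t)))
           (Gamma (real (n+1)) * (Digamma (real (n+1)) - ln c) / c^(n+1))"
proof -
  have "has_bochner_integral lborel (\<lambda>t. indicator {0<..} t * (ln t * t powr (real (n+1) - 1) * exp(-c*t)))
           (Gamma (real (n+1)) * (Digamma (real (n+1)) - ln c) / c powr (real (n+1)))"
    by (rule lnmom) (use c in auto)
  moreover have "c powr (real (n+1)) = c^(n+1)" using c by (rule powr_realpow)
  moreover have "(\<lambda>t. indicator {0<..} t * (ln t * t powr (real (n+1) - 1) * exp(-c*t))) = (\<lambda>t::real. indicator {0<..} t * (ln t * t^n * exp(-c*t)))"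
  proof
    fix t :: real show "indicator {0<..} t * (ln t * t powr (real (n+1) - 1) * exp(-c*t)) = indicator {0<..} t * (ln t * t^n * exp(-c*t))"
      by (cases "t > 0") (auto simp: powr_realpow)
  qed
  ultimately show ?thesis by simp
qed

definition cc :: "real \<Rightarrow> real \<Rightarrow> nat \<Rightarrow> nat \<Rightarrow> real" where
  "cc a b \<mu> \<nu> = a^\<mu> * b^\<nu> / (fact \<mu> * fact \<nu>)"

definition Dd :: "nat \<Rightarrow> real \<Rightarrow> nat \<Rightarrow> real \<Rightarrow> real \<Rightarrow> real" where
  "Dd kA a kB b y = (\<Sum>\<mu><Suc kA. \<Sum>\<nu><Suc kB. cc a b \<mu> \<nu> * ((a+b) * y^(\<mu>+\<nu>) - real (\<mu>+\<nu>) * y^(\<mu>+\<nu>-1)) * exp (-(a+b)*y))"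

lemma prodform: "SU kA a y * SU kB b y = (\<Sum>\<mu><Suc kA. \<Sum>\<nu><Suc kB. cc a b \<mu> \<nu> * y^(\<mu>+\<nu>) * exp (-(a+b)*y))"
proof -
  have "SU kA a y * SU kB b y = (\<Sum>\<mu><Suc kA. (a*y)^\<mu> * exp (-a*y) / fact \<mu>) * (\<Sum>\<nu><Suc kB. (b*y)^\<nu> * exp (-b*y) / fact \<nu>)"
    by (simp add: SU_def lessThan_Suc_atMost)
  also have "\<dots> = (\<Sum>\<mu><Suc kA. \<Sum>\<nu><Suc kB. (a*y)^\<mu> * exp (-a*y) / fact \<mu> * ((b*y)^\<nu> * exp (-b*y) / fact \<nu>))"
    by (rule sum_product)
  also have "\<dots> = (\<Sum>\<mu><Suc kA. \<Sum>\<nu><Suc kB. cc a b \<mu> \<nu> * y^(\<mu>+\<nu>) * exp (-(a+b)*y))"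
  proof (intro sum.cong refl)
    fix \<mu> \<nu>
    have "exp (-(a+b)*y) = exp (-a*y) * exp (-b*y)" by (simp add: exp_add[symmetric] algebra_simps)
    then show "(a*y)^\<mu> * exp (-a*y) / fact \<mu> * ((b*y)^\<nu> * exp (-b*y) / fact \<nu>) = cc a b \<mu> \<nu> * y^(\<mu>+\<nu>) * exp (-(a+b)*y)"
      by (simp add: cc_def power_mult_distrib power_add)
  qed
  finally show ?thesis .
qed

lemma term_deriv: "DERIV (\<lambda>y. C * y^n * exp (-c*y)) y :> - (C * (c * y^n - real n * y^(n-1)) * exp (-c*y))"
proof -
  have "DERIV (\<lambda>y. C * y^n * exp (-c*y)) y :> C * (real n * y^(n-1)) * exp (-c*y) + C * y^n * (exp (-c*y) * (-c))"
    by (auto intro!: derivative_eq_intros)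
  moreover have "C * (real n * y^(n-1)) * exp (-c*y) + C * y^n * (exp (-c*y) * (-c)) = - (C * (c * y^n - real n * y^(n-1)) * exp (-c*y))" by (simp add: algebra_simps)
  ultimately show ?thesis by simp
qed

lemma fY_eq_D:
  assumes y: "0 < y"
  shows "fY kA a kB b y = Dd kA a kB b y"
proof -
  have d1: "DERIV (\<lambda>y. SU kA a y * SU kB b y) y :> - fY kA a kB b y"
  proof -
    have "DERIV (\<lambda>y. SU kA a y * SU kB b y) y :> (- (a^(Suc kA) * y^kA * exp (-a*y) / fact kA)) * SU kB b y
            + (- (b^(Suc kB) * y^kB * exp (-b*y) / fact kB)) * SU kA a y"
      by (rule DERIV_mult[OF SU_deriv SU_deriv])
    moreover have "(- (a^(Suc kA) * y^kA * exp (-a*y) / fact kA)) * SU kB b y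
            + (- (b^(Suc kB) * y^kB * exp (-b*y) / fact kB)) * SU kA a y = - fY kA a kB b y" using y by (simp add: fY_def erlang_density_def algebra_simps)
    ultimately show ?thesis by simp
  qed
  have "DERIV (\<lambda>y. \<Sum>\<mu><Suc kA. \<Sum>\<nu><Suc kB. cc a b \<mu> \<nu> * y^(\<mu>+\<nu>) * exp (-(a+b)*y)) y :>
        (\<Sum>\<mu><Suc kA. \<Sum>\<nu><Suc kB. - (cc a b \<mu> \<nu> * ((a+b) * y^(\<mu>+\<nu>) - real (\<mu>+\<nu>) * y^(\<mu>+\<nu>-1)) * exp (-(a+b)*y)))"
    by (intro DERIV_sum term_deriv)
  moreover have "(\<Sum>\<mu><Suc kA. \<Sum>\<nu><Suc kB. - (cc a b \<mu> \<nu> * ((a+b) * y^(\<mu>+\<nu>) - real (\<mu>+\<nu>) * y^(\<mu>+\<nu>-1)) * exp (-(a+b)*y))) = - Dd kA a kB b y" by (simp only: Dd_def sum_negf)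
  ultimately have d2': "DERIV (\<lambda>y. \<Sum>\<mu><Suc kA. \<Sum>\<nu><Suc kB. cc a b \<mu> \<nu> * y^(\<mu>+\<nu>) * exp (-(a+b)*y)) y :> - Dd kA a kB b y"
    by (simp only:)
  have d2: "DERIV (\<lambda>y. SU kA a y * SU kB b y) y :> - Dd kA a kB b y"
    using d2' by (simp only: prodform)
  from DERIV_unique[OF d1 d2] show ?thesis by simp
qed




lemma Ylog:
  assumes a: "0 < a" and b: "0 < b"
  shows "has_bochner_integral lborel (\<lambda>y. fY kA a kB b y * ln y)
     (\<Sum>\<mu><Suc kA. \<Sum>\<nu><Suc kB. cc a b \<mu> \<nu> * ((a+b) * (Gamma (real (\<mu>+\<nu>+1)) * (Digamma (real (\<mu>+\<nu>+1)) - ln (a+b)) / (a+b)^(\<mu>+\<nu>+1))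
        - (if \<mu>+\<nu> = 0 then 0 else real (\<mu>+\<nu>) * (Gamma (real (\<mu>+\<nu>)) * (Digamma (real (\<mu>+\<nu>)) - ln (a+b)) / (a+b)^(\<mu>+\<nu>)))))"
proof -
  define c where "c = a + b"
  have c: "0 < c" using a b by (simp add: c_def)
  have T2: "has_bochner_integral lborel (\<lambda>t. real n * (indicator {0<..} t * (ln t * t^(n-1) * exp(-c*t))))
      (if n = 0 then 0 else real n * (Gamma (real n) * (Digamma (real n) - ln c) / c^n))" for n
  proof (cases n)
    case 0 then show ?thesis by (simp add: has_bochner_integral_zero)
  next
    case (Suc m)
    have "has_bochner_integral lborel (\<lambda>t. real n * (indicator {0<..} t * (ln t * t^m * exp(-c*t))))
      (real n * (Gamma (real (m+1)) * (Digamma (real (m+1)) - ln c) / c^(m+1)))"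
      by (intro has_bochner_integral_mult_right lnmom_nat c)
    then show ?thesis using Suc by simp
  qed
  have main: "has_bochner_integral lborel
     (\<lambda>y. \<Sum>\<mu><Suc kA. \<Sum>\<nu><Suc kB. cc a b \<mu> \<nu> * (c * (indicator {0<..} y * (ln y * y^(\<mu>+\<nu>) * exp(-c*y)))
          - real (\<mu>+\<nu>) * (indicator {0<..} y * (ln y * y^(\<mu>+\<nu>-1) * exp(-c*y)))))
     (\<Sum>\<mu><Suc kA. \<Sum>\<nu><Suc kB. cc a b \<mu> \<nu> * (c * (Gamma (real (\<mu>+\<nu>+1)) * (Digamma (real (\<mu>+\<nu>+1)) - ln c) / c^(\<mu>+\<nu>+1))
        - (if \<mu>+\<nu> = 0 then 0 else real (\<mu>+\<nu>) * (Gamma (real (\<mu>+\<nu>)) * (Digamma (real (\<mu>+\<nu>)) - ln c) / c^(\<mu>+\<nu>)))))"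
  proof (intro has_bochner_integral_sum has_bochner_integral_mult_right)
    fix \<mu> \<nu>
    show "has_bochner_integral lborel
          (\<lambda>y. c * (indicator {0<..} y * (ln y * y^(\<mu>+\<nu>) * exp(-c*y)))
             - real (\<mu>+\<nu>) * (indicator {0<..} y * (ln y * y^(\<mu>+\<nu>-1) * exp(-c*y))))
          (c * (Gamma (real (\<mu>+\<nu>+1)) * (Digamma (real (\<mu>+\<nu>+1)) - ln c) / c^(\<mu>+\<nu>+1))
        - (if \<mu>+\<nu> = 0 then 0 else real (\<mu>+\<nu>) * (Gamma (real (\<mu>+\<nu>)) * (Digamma (real (\<mu>+\<nu>)) - ln c) / c^(\<mu>+\<nu>))))"
      by (intro has_bochner_integral_diff has_bochner_integral_mult_right[OF lnmom_nat[OF c]] T2)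
  qed
  have eq: "fY kA a kB b y * ln y = (\<Sum>\<mu><Suc kA. \<Sum>\<nu><Suc kB. cc a b \<mu> \<nu> * (c * (indicator {0<..} y * (ln y * y^(\<mu>+\<nu>) * exp(-c*y)))
          - real (\<mu>+\<nu>) * (indicator {0<..} y * (ln y * y^(\<mu>+\<nu>-1) * exp(-c*y)))))" for y
  proof (cases "y > 0")
    case True
    have "fY kA a kB b y * ln y = Dd kA a kB b y * ln y" using True by (simp add: fY_eq_D)
    also have "\<dots> = (\<Sum>\<mu><Suc kA. \<Sum>\<nu><Suc kB. cc a b \<mu> \<nu> * ((a+b) * y^(\<mu>+\<nu>) - real (\<mu>+\<nu>) * y^(\<mu>+\<nu>-1)) * exp (-(a+b)*y) * ln y)"
      by (simp only: Dd_def sum_distrib_right)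
    also have "\<dots> = (\<Sum>\<mu><Suc kA. \<Sum>\<nu><Suc kB. cc a b \<mu> \<nu> * (c * (indicator {0<..} y * (ln y * y^(\<mu>+\<nu>) * exp(-c*y)))
          - real (\<mu>+\<nu>) * (indicator {0<..} y * (ln y * y^(\<mu>+\<nu>-1) * exp(-c*y)))))"
      using True by (intro sum.cong refl) (simp add: c_def algebra_simps)
    finally show ?thesis .
  next
    case False
    then have "y = 0 \<or> y < 0" by auto
    then show ?thesis by (auto simp: fY_def)
  qed
  have fe: "(\<lambda>y. fY kA a kB b y * ln y) = (\<lambda>y. \<Sum>\<mu><Suc kA. \<Sum>\<nu><Suc kB. cc a b \<mu> \<nu> * (c * (indicator {0<..} y * (ln y * y^(\<mu>+\<nu>) * exp(-c*y)))
          - real (\<mu>+\<nu>) * (indicator {0<..} y * (ln y * y^(\<mu>+\<nu>-1) * exp(-c*y)))))"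
    by (intro ext eq)
  show ?thesis unfolding fe using main unfolding c_def .
qed





lemma gamma_pdf_meas[measurable]: "gamma_pdf m \<Omega> \<in> borel_measurable borel"
  unfolding gamma_pdf_def by measurable

lemma gamma_pdf_erlang_pt:
  assumes m: "0 < m" and x: "x \<noteq> 0"
  shows "gamma_pdf m \<Omega> x = erlang_density (m - 1) (real m / \<Omega>) x"
proof (cases "x > 0")
  case True
  have s: "Suc (m - 1) = m" using m by simp
  have g0: "Gamma (real (Suc (m - 1))) = fact (m - 1)" by (simp only: of_nat_Suc Gamma_fact)
  have g: "Gamma (real m) = fact (m - 1)" using g0 unfolding s .
  have e: "- real m * x / \<Omega> = - (real m / \<Omega>) * x" by simp
  have "gamma_pdf m \<Omega> x = (real m / \<Omega>) ^ m * x ^ (m - 1) / fact (m - 1) * exp (- (real m / \<Omega>) * x)"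
    using True unfolding gamma_pdf_def g e by simp
  also have "\<dots> = erlang_density (m - 1) (real m / \<Omega>) x"
    using True unfolding erlang_density_def s by simp
  finally show ?thesis .
next
  case False then show ?thesis using x by (simp add: gamma_pdf_def erlang_density_def)
qed


lemma gamma_to_erlang:
  assumes m: "0 < m" and O: "0 < \<Omega>"
    and D: "distributed M lborel X (\<lambda>x. ennreal (gamma_pdf m \<Omega> x))"
  shows "distributed M lborel X (erlang_density (m - 1) (real m / \<Omega>))"
proof -
  have "AE x in lborel. ennreal (gamma_pdf m \<Omega> x) = ennreal (erlang_density (m - 1) (real m / \<Omega>) x)"
    using AE_lborel_singleton[of 0] by eventually_elim (simp add: gamma_pdf_erlang_pt[OF m])
  then show ?thesis using D by (subst (asm) distributed_cong_density) auto
qed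
lemma (in prob_space) sum_erlang:
  assumes ind: "indep_vars (\<lambda>_. borel) F I0" and J: "J \<subseteq> I0" "finite J" "J \<noteq> {}"
    and m: "0 < m" and O: "0 < \<Omega>"
    and D: "\<And>j. j \<in> J \<Longrightarrow> distributed M lborel (F j) (\<lambda>x. ennreal (gamma_pdf m \<Omega> x))"
  shows "distributed M lborel (\<lambda>\<omega>. \<Sum>j\<in>J. F j \<omega>) (erlang_density (m * card J - 1) (real m / \<Omega>))"
proof -
  have "distributed M lborel (\<lambda>\<omega>. \<Sum>j\<in>J. F j \<omega>) (erlang_density ((\<Sum>j\<in>J. Suc (m - 1)) - 1) (real m / \<Omega>))"
    using J m O by (intro erlang_distributed_sum indep_vars_subset[OF ind] gamma_to_erlang D) auto
  moreover have "(\<Sum>j\<in>J. Suc (m - 1)) = m * card J" using m by simp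
  ultimately show ?thesis by simp
qed

lemma (in prob_space) erlang_AE_nonneg:
  assumes D: "distributed M lborel X (erlang_density k l)"
  shows "AE x in M. 0 \<le> X x"
proof -
  have "AE x in lborel. 0 < erlang_density k l x \<longrightarrow> 0 \<le> x"
    by (auto simp: erlang_density_def)
  then show ?thesis by (subst distributed_AE2[OF D]) auto
qed



lemma gen1: "(N::real) / D * (P / X - Q / X) = N / (D * X) * (P - Q)"
  by (simp add: diff_divide_distrib[symmetric] times_divide_eq_left times_divide_eq_right divide_divide_eq_left mult.commute mult.left_commute)

lemma term_eq:
  fixes a2 Osr Ord :: real and msr mrd \<mu> \<nu> :: nat
  assumes a2: "0 < a2" and O1: "0 < Osr" and O2: "0 < Ord"
  defines "Xi \<equiv> real msr / (Osr * a2) + real mrd / Ord"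
  assumes Xi: "0 < Xi"
  shows "cc (real msr / Osr / a2) (real mrd / Ord) \<mu> \<nu> *
      ((real msr / Osr / a2 + real mrd / Ord) * (Gamma (real (\<mu>+\<nu>+1)) * (Digamma (real (\<mu>+\<nu>+1)) - ln (real msr / Osr / a2 + real mrd / Ord)) / (real msr / Osr / a2 + real mrd / Ord)^(\<mu>+\<nu>+1))
        - (if \<mu>+\<nu> = 0 then 0 else real (\<mu>+\<nu>) * (Gamma (real (\<mu>+\<nu>)) * (Digamma (real (\<mu>+\<nu>)) - ln (real msr / Osr / a2 + real mrd / Ord)) / (real msr / Osr / a2 + real mrd / Ord)^(\<mu>+\<nu>))))
    = real msr ^ \<mu> * real mrd ^ \<nu> /
                (a2 ^ \<mu> * Osr ^ \<mu> * Ord ^ \<nu> * fact \<mu> * fact \<nu> * Xi ^ (\<mu> + \<nu>)) *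
              (Gamma (real (\<mu> + \<nu> + 1)) * (Digamma (real (\<mu> + \<nu> + 1)) - ln Xi)
               - (if \<mu> + \<nu> = 0 then 0
                  else real (\<mu> + \<nu>) * Gamma (real (\<mu> + \<nu>)) * (Digamma (real (\<mu> + \<nu>)) - ln Xi)))"
proof -
  have e: "real msr / Osr / a2 + real mrd / Ord = Xi" by (simp add: Xi_def)
  define P where "P = Gamma (real (\<mu>+\<nu>+1)) * (Digamma (real (\<mu>+\<nu>+1)) - ln Xi)"
  define Q where "Q = (if \<mu>+\<nu> = 0 then 0 else real (\<mu>+\<nu>) * Gamma (real (\<mu>+\<nu>)) * (Digamma (real (\<mu>+\<nu>)) - ln Xi))"
  have q: "(if \<mu>+\<nu> = 0 then 0 else real (\<mu>+\<nu>) * (Gamma (real (\<mu>+\<nu>)) * (Digamma (real (\<mu>+\<nu>)) - ln Xi) / Xi^(\<mu>+\<nu>))) = Q / Xi^(\<mu>+\<nu>)"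
    by (simp add: Q_def)
  have p: "Xi * (P / Xi^(\<mu>+\<nu>+1)) = P / Xi^(\<mu>+\<nu>)" using Xi by (simp add: field_simps)
  have c: "cc (real msr / Osr / a2) (real mrd / Ord) \<mu> \<nu> = real msr ^ \<mu> * real mrd ^ \<nu> / (a2 ^ \<mu> * Osr ^ \<mu> * Ord ^ \<nu> * fact \<mu> * fact \<nu>)"
    using a2 O1 O2 by (simp add: cc_def power_divide field_simps)
  show ?thesis
    unfolding e P_def[symmetric] Q_def[symmetric] q p c
    by (rule gen1)
qed




theorem mainTheorem7:
  fixes M :: "'a measure"
    and Nr Nd msr msd mrd :: nat
    and \<Omega>sr \<Omega>sd \<Omega>rd a1 a2 :: real
    and Gsr Gsd Grd :: "nat \<Rightarrow> 'a \<Rightarrow> real"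
  assumes "prob_space M"
    and "Nr > 0" "Nd > 0" "msr > 0" "msd > 0" "mrd > 0"
    and "\<Omega>sr > 0" "\<Omega>sd > 0" "\<Omega>rd > 0"
    and "0 < a1" "a1 < 1" "0 < a2" "a2 < 1" "a1 + a2 = 1" "a1 > a2"
    and "\<And>i. i \<in> {1..Nr} \<Longrightarrow> distributed M lborel (Gsr i) (\<lambda>x. ennreal (gamma_pdf msr \<Omega>sr x))"
    and "\<And>j. j \<in> {1..Nd} \<Longrightarrow> distributed M lborel (Gsd j) (\<lambda>x. ennreal (gamma_pdf msd \<Omega>sd x))"
    and "\<And>k. k \<in> {1..Nd} \<Longrightarrow> distributed M lborel (Grd k) (\<lambda>x. ennreal (gamma_pdf mrd \<Omega>rd x))"
    and "prob_space.indep_vars M (\<lambda>_. borel) (all_links Gsr Gsd Grd) (link_idx Nr Nd)"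
  shows
    "let gsr = (\<lambda>\<omega>. \<Sum>i=1..Nr. Gsr i \<omega>);
         gsd = (\<lambda>\<omega>. \<Sum>j=1..Nd. Gsd j \<omega>);
         grd = (\<lambda>\<omega>. \<Sum>k=1..Nd. Grd k \<omega>);
         Y = (\<lambda>\<omega>. min (a2 * gsr \<omega>) (grd \<omega>));
         X = (\<lambda>\<omega>. min (gsr \<omega>) (gsd \<omega>));
         C2 = (\<lambda>\<rho>::real. 1/2 * (\<integral>\<omega>. log 2 (1 + \<rho> * Y \<omega>) \<partial>M));
         C1 = (\<lambda>\<rho>::real. 1/2 * (\<integral>\<omega>. log 2 (1 + a1 * \<rho> * X \<omega> / (a2 * \<rho> * X \<omega> + 1)) \<partial>M));
         \<Xi> = real msr / (\<Omega>sr * a2) + real mrd / \<Omega>rd;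
         L = 1 / (2 * ln 2) * (\<Sum>\<mu><msr * Nr. \<Sum>\<nu><mrd * Nd.
              real msr ^ \<mu> * real mrd ^ \<nu> /
                (a2 ^ \<mu> * \<Omega>sr ^ \<mu> * \<Omega>rd ^ \<nu> * fact \<mu> * fact \<nu> * \<Xi> ^ (\<mu> + \<nu>)) *
              (Gamma (real (\<mu> + \<nu> + 1)) * (Digamma (real (\<mu> + \<nu> + 1)) - ln \<Xi>)
               - (if \<mu> + \<nu> = 0 then 0
                  else real (\<mu> + \<nu>) * Gamma (real (\<mu> + \<nu>)) * (Digamma (real (\<mu> + \<nu>)) - ln \<Xi>))))
     in ((\<lambda>\<rho>. C2 \<rho> - 1/2 * log 2 \<rho>) \<longlongrightarrow> L) at_top
        \<and> (\<lambda>\<rho>. C1 \<rho> + C2 \<rho> - 1/2 * log 2 \<rho>) \<in> O[at_top](\<lambda>_. 1)"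
proof -
  interpret prob_space M by fact
  define F where "F = all_links Gsr Gsd Grd"
  define I0 where "I0 = link_idx Nr Nd"
  have indep: "indep_vars (\<lambda>_. borel) F I0" using assms(19) by (simp add: F_def I0_def)
  define Asr where "Asr = (Inl ` {1..Nr} :: (nat + nat + nat) set)"
  define Asd where "Asd = (Inr ` Inl ` {1..Nd} :: (nat + nat + nat) set)"
  define Ard where "Ard = (Inr ` Inr ` {1..Nd} :: (nat + nat + nat) set)"
  have subs: "Asr \<subseteq> I0" "Asd \<subseteq> I0" "Ard \<subseteq> I0"
    by (auto simp: I0_def link_idx_def Asr_def Asd_def Ard_def)
  have fin: "finite Asr" "finite Asd" "finite Ard" by (auto simp: Asr_def Asd_def Ard_def)
  have ne: "Asr \<noteq> {}" "Asd \<noteq> {}" "Ard \<noteq> {}" using assms(2,3) by (auto simp: Asr_def Asd_def Ard_def)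
  have cards: "card Asr = Nr" "card Asd = Nd" "card Ard = Nd"
    by (auto simp: Asr_def Asd_def Ard_def card_image inj_on_def)
  have sums: "(\<Sum>j\<in>Asr. F j \<omega>) = (\<Sum>i=1..Nr. Gsr i \<omega>)" "(\<Sum>j\<in>Asd. F j \<omega>) = (\<Sum>i=1..Nd. Gsd i \<omega>)"
    "(\<Sum>j\<in>Ard. F j \<omega>) = (\<Sum>i=1..Nd. Grd i \<omega>)" for \<omega>
    by (auto simp: Asr_def Asd_def Ard_def sum.reindex inj_on_def F_def all_links_def)
  have "distributed M lborel (\<lambda>\<omega>. \<Sum>j\<in>Asr. F j \<omega>) (erlang_density (msr * card Asr - 1) (real msr / \<Omega>sr))"
    by (rule sum_erlang[OF indep subs(1) fin(1) ne(1) assms(4,7)]) (use assms(16) in \<open>auto simp: Asr_def F_def all_links_def\<close>)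
  then have dsr: "distributed M lborel (\<lambda>\<omega>. \<Sum>i=1..Nr. Gsr i \<omega>) (erlang_density (msr * Nr - 1) (real msr / \<Omega>sr))"
    by (simp add: sums cards)
  have "distributed M lborel (\<lambda>\<omega>. \<Sum>j\<in>Asd. F j \<omega>) (erlang_density (msd * card Asd - 1) (real msd / \<Omega>sd))"
    by (rule sum_erlang[OF indep subs(2) fin(2) ne(2) assms(5,8)]) (use assms(17) in \<open>auto simp: Asd_def F_def all_links_def\<close>)
  then have dsd: "distributed M lborel (\<lambda>\<omega>. \<Sum>i=1..Nd. Gsd i \<omega>) (erlang_density (msd * Nd - 1) (real msd / \<Omega>sd))"
    by (simp add: sums cards)
  have "distributed M lborel (\<lambda>\<omega>. \<Sum>j\<in>Ard. F j \<omega>) (erlang_density (mrd * card Ard - 1) (real mrd / \<Omega>rd))"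
    by (rule sum_erlang[OF indep subs(3) fin(3) ne(3) assms(6,9)]) (use assms(18) in \<open>auto simp: Ard_def F_def all_links_def\<close>)
  then have drd: "distributed M lborel (\<lambda>\<omega>. \<Sum>i=1..Nd. Grd i \<omega>) (erlang_density (mrd * Nd - 1) (real mrd / \<Omega>rd))"
    by (simp add: sums cards)
  define kA where "kA = msr * Nr - 1"
  define kB where "kB = mrd * Nd - 1"
  define \<alpha> where "\<alpha> = real msr / \<Omega>sr / a2"
  define \<beta> where "\<beta> = real mrd / \<Omega>rd"
  have \<alpha>: "0 < \<alpha>" using assms(4,7,12) by (simp add: \<alpha>_def)
  have \<beta>: "0 < \<beta>" using assms(6,9) by (simp add: \<beta>_def)
  define U where "U = (\<lambda>\<omega>. a2 * (\<Sum>i=1..Nr. Gsr i \<omega>))"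
  define V where "V = (\<lambda>\<omega>. \<Sum>k=1..Nd. Grd k \<omega>)"
  have dU: "distributed M lborel U (erlang_density kA \<alpha>)"
    unfolding U_def kA_def \<alpha>_def
    by (rule erlang_distributed_mult_const[OF dsr]) (use assms(4,7,12) in auto)
  have dV: "distributed M lborel V (erlang_density kB \<beta>)"
    unfolding V_def kB_def \<beta>_def by (rule drd)
  have indUV: "indep_var borel U borel V"
  proof -
    have "indep_var (PiM Asr (\<lambda>_. borel)) (\<lambda>\<omega>. restrict (\<lambda>i. F i \<omega>) Asr) (PiM Ard (\<lambda>_. borel)) (\<lambda>\<omega>. restrict (\<lambda>i. F i \<omega>) Ard)"
      by (rule indep_var_restrict[OF indep]) (use subs in \<open>auto simp: Asr_def Ard_def\<close>)
    then have "indep_var borel ((\<lambda>f. a2 * (\<Sum>i=1..Nr. f (Inl i))) \<circ> (\<lambda>\<omega>. restrict (\<lambda>i. F i \<omega>) Asr))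
       borel ((\<lambda>f. \<Sum>k=1..Nd. f (Inr (Inr k))) \<circ> (\<lambda>\<omega>. restrict (\<lambda>i. F i \<omega>) Ard))"
    proof (rule indep_var_compose)
      have [measurable]: "i \<in> {1..Nr} \<Longrightarrow> (\<lambda>f. f (Inl i)) \<in> borel_measurable (PiM Asr (\<lambda>_. borel))" for i
        by (rule measurable_component_singleton) (auto simp: Asr_def)
      show "(\<lambda>f. a2 * (\<Sum>i=1..Nr. f (Inl i))) \<in> borel_measurable (PiM Asr (\<lambda>_. borel))"
        by (intro borel_measurable_times borel_measurable_const borel_measurable_sum) auto
      show "(\<lambda>f. \<Sum>k=1..Nd. f (Inr (Inr k)) :: real) \<in> borel_measurable (PiM Ard (\<lambda>_. borel))"
        by (rule borel_measurable_sum) (auto simp: Ard_def intro!: measurable_component_singleton)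
    qed
    moreover have "((\<lambda>f. a2 * (\<Sum>i=1..Nr. f (Inl i))) \<circ> (\<lambda>\<omega>. restrict (\<lambda>i. F i \<omega>) Asr)) = U"
      by (auto intro!: ext sum.cong simp: U_def Asr_def F_def all_links_def)
    moreover have "((\<lambda>f. \<Sum>k=1..Nd. f (Inr (Inr k))) \<circ> (\<lambda>\<omega>. restrict (\<lambda>i. F i \<omega>) Ard)) = V"
      by (auto intro!: ext sum.cong simp: V_def Ard_def F_def all_links_def)
    ultimately show ?thesis by simp
  qed
  define Y where "Y = (\<lambda>\<omega>. min (U \<omega>) (V \<omega>))"
  have dY: "distributed M lborel Y (fY kA \<alpha> kB \<beta>)"
    unfolding Y_def by (rule Ydist[OF dU dV \<alpha> \<beta> indUV])
  define Lv where "Lv = (\<Sum>\<mu><Suc kA. \<Sum>\<nu><Suc kB. cc \<alpha> \<beta> \<mu> \<nu> * ((\<alpha>+\<beta>) * (Gamma (real (\<mu>+\<nu>+1)) * (Digamma (real (\<mu>+\<nu>+1)) - ln (\<alpha>+\<beta>)) / (\<alpha>+\<beta>)^(\<mu>+\<nu>+1))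
        - (if \<mu>+\<nu> = 0 then 0 else real (\<mu>+\<nu>) * (Gamma (real (\<mu>+\<nu>)) * (Digamma (real (\<mu>+\<nu>)) - ln (\<alpha>+\<beta>)) / (\<alpha>+\<beta>)^(\<mu>+\<nu>)))))"
  have hbY: "has_bochner_integral lborel (\<lambda>y. fY kA \<alpha> kB \<beta> y * ln y) Lv"
    unfolding Lv_def by (rule Ylog[OF \<alpha> \<beta>])
  have fYnn: "\<And>y. 0 \<le> fY kA \<alpha> kB \<beta> y" using fY_nonneg[OF \<alpha> \<beta>] .
  have lnm: "(\<lambda>x::real. ln x) \<in> borel_measurable lborel" by simp
  have i1: "integrable lborel (\<lambda>y. fY kA \<alpha> kB \<beta> y * ln y)" using hbY by (rule integrable.intros)
  have intlnY: "integrable M (\<lambda>\<omega>. ln (Y \<omega>))"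
    using distributed_integrable[OF dY lnm] fYnn i1 by simp
  have "(\<integral>y. fY kA \<alpha> kB \<beta> y * ln y \<partial>lborel) = (\<integral>\<omega>. ln (Y \<omega>) \<partial>M)"
    by (rule distributed_integral[OF dY lnm]) (rule fYnn)
  then have ElnY: "(\<integral>\<omega>. ln (Y \<omega>) \<partial>M) = Lv" using has_bochner_integral_integral_eq[OF hbY] by simp
  have "AE x in lborel. 0 < ennreal (fY kA \<alpha> kB \<beta> x) \<longrightarrow> 0 < x"
    using AE_lborel_singleton[of 0] by eventually_elim (auto simp: fY_def)
  moreover have "(AE \<omega> in M. 0 < Y \<omega>) \<longleftrightarrow> (AE x in lborel. 0 < ennreal (fY kA \<alpha> kB \<beta> x) \<longrightarrow> 0 < x)"
    by (rule distributed_AE2[OF dY]) simp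
  ultimately have Ypos: "AE \<omega> in M. 0 < Y \<omega>" by simp
  have Vnn: "AE \<omega> in M. 0 \<le> V \<omega>" by (rule erlang_AE_nonneg[OF dV])
  have Vint: "integrable M V" using erlang_ith_moment_integrable[OF \<beta> dV, of 1] by simp
  have YleV: "Y \<omega> \<le> V \<omega>" for \<omega> by (simp add: Y_def)
  have Ym[measurable]: "Y \<in> borel_measurable M" using distributed_measurable[OF dY] by simp
  have Vm[measurable]: "V \<in> borel_measurable M" using distributed_measurable[OF dV] by simp
  define s where "s = (\<lambda>\<rho> \<omega>. ln (1/\<rho> + Y \<omega>))"
  define w where "w = (\<lambda>\<omega>. \<bar>ln (Y \<omega>)\<bar> + \<bar>V \<omega>\<bar>)"
  have sm[measurable]: "s \<rho> \<in> borel_measurable M" for \<rho> unfolding s_def by measurable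
  have wint: "integrable M w" unfolding w_def using intlnY Vint by auto
  have bnd: "AE \<omega> in M. \<bar>s \<rho> \<omega>\<bar> \<le> w \<omega>" if \<rho>: "\<rho> \<ge> 1" for \<rho>
    using Ypos Vnn
  proof eventually_elim
    fix \<omega> assume Y0: "0 < Y \<omega>" and V0: "0 \<le> V \<omega>"
    have r: "0 < 1/\<rho>" "1/\<rho> \<le> 1" using \<rho> by auto
    have l1: "ln (Y \<omega>) \<le> ln (1/\<rho> + Y \<omega>)" by (rule ln_mono) (use Y0 r in linarith)+
    have "ln (1/\<rho> + Y \<omega>) \<le> ln (1 + Y \<omega>)" by (rule ln_mono) (use Y0 r in linarith)+
    also have "\<dots> \<le> Y \<omega>" using Y0 by (intro ln_add_one_self_le_self) simp
    also have "\<dots> \<le> V \<omega>" by (rule YleV)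
    finally have l2: "ln (1/\<rho> + Y \<omega>) \<le> V \<omega>" .
    show "\<bar>s \<rho> \<omega>\<bar> \<le> w \<omega>" using l1 l2 V0 by (auto simp: s_def w_def abs_if)
  qed
  have inv0: "((\<lambda>\<rho>::real. 1/\<rho>) \<longlongrightarrow> 0) at_top"
    by (rule tendsto_divide_0[OF tendsto_const]) (rule filterlim_at_top_imp_at_infinity[OF filterlim_ident])
  have slim: "AE \<omega> in M. ((\<lambda>\<rho>. s \<rho> \<omega>) \<longlongrightarrow> ln (Y \<omega>)) at_top"
    using Ypos
  proof eventually_elim
    fix \<omega> assume Y0: "0 < Y \<omega>"
    have "((\<lambda>\<rho>. 1/\<rho> + Y \<omega>) \<longlongrightarrow> 0 + Y \<omega>) at_top" by (intro tendsto_add inv0 tendsto_const)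
    then have "((\<lambda>\<rho>. ln (1/\<rho> + Y \<omega>)) \<longlongrightarrow> ln (0 + Y \<omega>)) at_top" by (rule tendsto_ln) (use Y0 in simp)
    then show "((\<lambda>\<rho>. s \<rho> \<omega>) \<longlongrightarrow> ln (Y \<omega>)) at_top" by (simp add: s_def)
  qed
  have conv: "((\<lambda>\<rho>. \<integral>\<omega>. s \<rho> \<omega> \<partial>M) \<longlongrightarrow> \<integral>\<omega>. ln (Y \<omega>) \<partial>M) at_top"
  proof (rule integral_dominated_convergence_at_top[where w=w])
    show "(\<lambda>\<omega>. ln (Y \<omega>)) \<in> borel_measurable M" by measurable
    show "\<forall>\<^sub>F i in at_top. AE x in M. norm (s i x) \<le> w x"
      unfolding eventually_at_top_linorder using bnd by auto
  qed (use sm wint slim in auto)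
  have eqv: "\<forall>\<^sub>F \<rho> in at_top. 1/2 * (\<integral>\<omega>. log 2 (1 + \<rho> * Y \<omega>) \<partial>M) - 1/2 * log 2 \<rho>
      = 1 / (2 * ln 2) * (\<integral>\<omega>. s \<rho> \<omega> \<partial>M)"
    unfolding eventually_at_top_linorder
  proof (intro exI allI impI)
    fix \<rho> :: real assume \<rho>: "\<rho> \<ge> 1"
    have sint: "integrable M (s \<rho>)"
      by (rule Bochner_Integration.integrable_bound[OF wint sm]) (use bnd[OF \<rho>] in \<open>auto simp: w_def\<close>)
    have "(\<integral>\<omega>. log 2 (1 + \<rho> * Y \<omega>) \<partial>M) = (\<integral>\<omega>. (ln \<rho> + s \<rho> \<omega>) / ln 2 \<partial>M)"
    proof (rule integral_cong_AE)
      show "(\<lambda>\<omega>. log 2 (1 + \<rho> * Y \<omega>)) \<in> borel_measurable M" by measurable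
      show "(\<lambda>\<omega>. (ln \<rho> + s \<rho> \<omega>) / ln 2) \<in> borel_measurable M" by measurable
      show "AE \<omega> in M. log 2 (1 + \<rho> * Y \<omega>) = (ln \<rho> + s \<rho> \<omega>) / ln 2"
        using Ypos
      proof eventually_elim
        fix \<omega> assume Y0: "0 < Y \<omega>"
        have "1 + \<rho> * Y \<omega> = \<rho> * (1/\<rho> + Y \<omega>)" using \<rho> by (simp add: field_simps)
        moreover have p: "0 < 1/\<rho> + Y \<omega>" using \<rho> Y0 by (simp add: add_pos_pos)
        moreover have "ln (\<rho> * (1/\<rho> + Y \<omega>)) = ln \<rho> + ln (1/\<rho> + Y \<omega>)"
          by (rule ln_mult_pos) (use \<rho> p in auto)
        ultimately have "ln (1 + \<rho> * Y \<omega>) = ln \<rho> + ln (1/\<rho> + Y \<omega>)" by simp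
        then show "log 2 (1 + \<rho> * Y \<omega>) = (ln \<rho> + s \<rho> \<omega>) / ln 2"
          by (simp add: log_def s_def)
      qed
    qed
    also have "\<dots> = (ln \<rho> + (\<integral>\<omega>. s \<rho> \<omega> \<partial>M)) / ln 2"
      using sint by (simp add: integral_divide_zero prob_space.prob_space[OF assms(1)])
    finally show "1/2 * (\<integral>\<omega>. log 2 (1 + \<rho> * Y \<omega>) \<partial>M) - 1/2 * log 2 \<rho>
      = 1 / (2 * ln 2) * (\<integral>\<omega>. s \<rho> \<omega> \<partial>M)"
      by (simp add: log_def field_simps)
  qed
  have lim2: "((\<lambda>\<rho>. 1/2 * (\<integral>\<omega>. log 2 (1 + \<rho> * Y \<omega>) \<partial>M) - 1/2 * log 2 \<rho>) \<longlongrightarrow> 1 / (2 * ln 2) * Lv) at_top"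
  proof -
    have "((\<lambda>\<rho>. 1 / (2 * ln 2) * (\<integral>\<omega>. s \<rho> \<omega> \<partial>M)) \<longlongrightarrow> 1 / (2 * ln 2) * Lv) at_top"
      using conv ElnY by (intro tendsto_mult_left) simp
    then show ?thesis using tendsto_cong[OF eqv] by simp
  qed
  define Xi where "Xi = real msr / (\<Omega>sr * a2) + real mrd / \<Omega>rd"
  have Xipos: "0 < Xi" using assms(4,6,7,9,12) unfolding Xi_def by (intro add_pos_pos divide_pos_pos mult_pos_pos) auto
  define LL where "LL = 1 / (2 * ln 2) * (\<Sum>\<mu><msr * Nr. \<Sum>\<nu><mrd * Nd.
              real msr ^ \<mu> * real mrd ^ \<nu> /
                (a2 ^ \<mu> * \<Omega>sr ^ \<mu> * \<Omega>rd ^ \<nu> * fact \<mu> * fact \<nu> * Xi ^ (\<mu> + \<nu>)) *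
              (Gamma (real (\<mu> + \<nu> + 1)) * (Digamma (real (\<mu> + \<nu> + 1)) - ln Xi)
               - (if \<mu> + \<nu> = 0 then 0
                  else real (\<mu> + \<nu>) * Gamma (real (\<mu> + \<nu>)) * (Digamma (real (\<mu> + \<nu>)) - ln Xi))))"
  have LLeq: "1 / (2 * ln 2) * Lv = LL"
  proof -
    have sA: "Suc kA = msr * Nr" using assms(2,4) by (simp add: kA_def)
    have sB: "Suc kB = mrd * Nd" using assms(3,6) by (simp add: kB_def)
    show ?thesis unfolding Lv_def LL_def sA sB \<alpha>_def \<beta>_def Xi_def
      by (intro arg_cong[where f="\<lambda>x. 1 / (2 * ln 2) * x"] sum.cong refl term_eq)
         (use assms(7,9,12) Xipos in \<open>auto simp: Xi_def\<close>)
  qed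
  have limL: "((\<lambda>\<rho>. 1/2 * (\<integral>\<omega>. log 2 (1 + \<rho> * Y \<omega>) \<partial>M) - 1/2 * log 2 \<rho>) \<longlongrightarrow> LL) at_top"
    using lim2 unfolding LLeq .
  define X where "X = (\<lambda>\<omega>. min (\<Sum>i=1..Nr. Gsr i \<omega>) (\<Sum>j=1..Nd. Gsd j \<omega>))"
  have Xm[measurable]: "X \<in> borel_measurable M"
    using distributed_measurable[OF dsr] distributed_measurable[OF dsd] unfolding X_def by simp
  have Xnn: "AE \<omega> in M. 0 \<le> X \<omega>"
    using erlang_AE_nonneg[OF dsr] erlang_AE_nonneg[OF dsd] by eventually_elim (simp add: X_def)
  define K where "K = log 2 (1 + a1 / a2)"
  have C1b: "\<bar>1/2 * (\<integral>\<omega>. log 2 (1 + a1 * \<rho> * X \<omega> / (a2 * \<rho> * X \<omega> + 1)) \<partial>M)\<bar> \<le> K / 2"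
    if \<rho>: "\<rho> > 0" for \<rho>
  proof -
    define h where "h = (\<lambda>\<omega>. log 2 (1 + a1 * \<rho> * X \<omega> / (a2 * \<rho> * X \<omega> + 1)))"
    have hm[measurable]: "h \<in> borel_measurable M" unfolding h_def by measurable
    have hb: "AE \<omega> in M. 0 \<le> h \<omega> \<and> h \<omega> \<le> K"
      using Xnn
    proof eventually_elim
      fix \<omega> assume x: "0 \<le> X \<omega>"
      define q where "q = a1 * \<rho> * X \<omega> / (a2 * \<rho> * X \<omega> + 1)"
      have den: "0 < a2 * \<rho> * X \<omega> + 1" using x \<rho> assms(12) by (intro add_nonneg_pos mult_nonneg_nonneg) auto
      have q0: "0 \<le> q" unfolding q_def using x \<rho> assms(10) den by simp
      have "a1 * \<rho> * X \<omega> * a2 \<le> a1 * (a2 * \<rho> * X \<omega> + 1)" using assms(10) by (simp add: algebra_simps)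
      then have q1: "q \<le> a1 / a2" unfolding q_def using den assms(12) by (simp add: field_simps)
      have "log 2 1 \<le> log 2 (1 + q)" using q0 by (intro log_mono) auto
      moreover have "log 2 (1 + q) \<le> log 2 (1 + a1 / a2)" using q0 q1 by (intro log_mono) auto
      ultimately show "0 \<le> h \<omega> \<and> h \<omega> \<le> K" by (simp add: h_def K_def q_def)
    qed
    have hint: "integrable M h"
      by (rule Bochner_Integration.integrable_bound[of _ "\<lambda>_. K"]) (use hb in \<open>auto\<close>)
    have "0 \<le> integral\<^sup>L M h" using hb by (intro integral_nonneg_AE) auto
    moreover have "integral\<^sup>L M h \<le> (\<integral>\<omega>. K \<partial>M)"
      using hb by (intro integral_mono_AE hint) auto
    moreover have "(\<integral>\<omega>. K \<partial>M) = K" by (simp add: prob_space.prob_space[OF assms(1)])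
    ultimately show ?thesis unfolding h_def by (simp add: prob_space.prob_space[OF assms(1)])
  qed
  have bigo: "(\<lambda>\<rho>. 1/2 * (\<integral>\<omega>. log 2 (1 + a1 * \<rho> * X \<omega> / (a2 * \<rho> * X \<omega> + 1)) \<partial>M)
       + 1/2 * (\<integral>\<omega>. log 2 (1 + \<rho> * Y \<omega>) \<partial>M) - 1/2 * log 2 \<rho>) \<in> O[at_top](\<lambda>_. 1)"
  proof (rule bigoI[where c = "K/2 + \<bar>LL\<bar> + 1"])
    have ev1: "\<forall>\<^sub>F \<rho> in at_top. dist (1/2 * (\<integral>\<omega>. log 2 (1 + \<rho> * Y \<omega>) \<partial>M) - 1/2 * log 2 \<rho>) LL < 1"
      using tendstoD[OF limL, of 1] by simp
    moreover have ev2: "\<forall>\<^sub>F \<rho> in at_top. (\<rho>::real) > 0" by (rule eventually_gt_at_top)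
    ultimately show "\<forall>\<^sub>F \<rho> in at_top. norm (1/2 * (\<integral>\<omega>. log 2 (1 + a1 * \<rho> * X \<omega> / (a2 * \<rho> * X \<omega> + 1)) \<partial>M)
       + 1/2 * (\<integral>\<omega>. log 2 (1 + \<rho> * Y \<omega>) \<partial>M) - 1/2 * log 2 \<rho>) \<le> (K/2 + \<bar>LL\<bar> + 1) * norm (1::real)"
    proof eventually_elim
      fix \<rho> :: real
      assume d: "dist (1/2 * (\<integral>\<omega>. log 2 (1 + \<rho> * Y \<omega>) \<partial>M) - 1/2 * log 2 \<rho>) LL < 1" and r: "\<rho> > 0"
      have c1: "\<bar>1/2 * (\<integral>\<omega>. log 2 (1 + a1 * \<rho> * X \<omega> / (a2 * \<rho> * X \<omega> + 1)) \<partial>M)\<bar> \<le> K / 2"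
        by (rule C1b[OF r])
      show "norm (1/2 * (\<integral>\<omega>. log 2 (1 + a1 * \<rho> * X \<omega> / (a2 * \<rho> * X \<omega> + 1)) \<partial>M)
       + 1/2 * (\<integral>\<omega>. log 2 (1 + \<rho> * Y \<omega>) \<partial>M) - 1/2 * log 2 \<rho>) \<le> (K/2 + \<bar>LL\<bar> + 1) * norm (1::real)"
        using c1 d by (simp add: dist_real_def abs_if split: if_splits)
    qed
  qed
  note limL' = limL[unfolded LL_def Xi_def Y_def U_def V_def]
  note bigo' = bigo[unfolded Y_def U_def V_def X_def]
  show ?thesis unfolding Let_def using limL' bigo' by (rule conjI)
qed

end
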